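(* Let $M,N$ be positive integers and $P_s>0$. Let $\{x[k,l] : 0\le k\le N-1,\ 0\le l\le M-1\}$ be independent and identically distributed QPSK symbols of power $P_s$, i.e. each $x[k,l]$ is uniformly distributed on $\{\sqrt{P_s/2}\,(\pm 1 \pm \mathrm{i})\}$ (so $|x[k,l]|^2=P_s$). Define the matrix $\widetilde{\mathbf{X}}\in\mathbb{C}^{MN\times MN}$ as follows: for row index $p=k'+Nl'$ and column index $q=k''+Nl''$ with $0\le k',k''\le N-1$ and $0\le l',l''\le M-1$, $$ \widetilde{\mathbf{X}}[p,q]=\begin{cases} x\big[[k'-k'']_N,[l'-l'']_M\big]\, e^{-\mathrm{i}2\pi\frac{k'}{N}}\, e^{\mathrm{i}2\pi\frac{(k'')_N\,[l'-l'']_M}{MN}} & \text{if } l'<l'',\\[4pt] x\big[[k'-k'']_N,[l'-l'']_M\big]\, e^{\mathrm{i}2\pi\frac{(k'')_N\,[l'-l'']_M}{MN}} & \text{otherwise,} \end{cases} $$ and let $\mathbf{G}=\widetilde{\mathbf{X}}^{\mathrm H}\widetilde{\mathbf{X}}\in\mathbb{C}^{MN\times MN}$. Then for every off-diagonal entry, i.e. every $0\le p\ne q\le MN-1$, $$ \mathbb{E}\big[\mathbf{G}[p,q]\big]=0,\qquad \operatorname{var}\big[\mathbf{G}[p,q]\big]=MNP_s^2 . $$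
   Context: $\mathrm{i}$ denotes the imaginary unit and $\widetilde{\mathbf{X}}^{\mathrm H}$ the conjugate transpose. $[a]_N$ and $[a]_M$ denote the residues of the integer $a$ modulo $N$ and modulo $M$ (in $\{0,\dots,N-1\}$ and $\{0,\dots,M-1\}$ respectively). For an integer $0\le k\le N-1$, $(k)_N=k$ if $k\le N/2$ and $(k)_N=k-N$ otherwise. (In the paper, $\widetilde{\mathbf{X}}$ arises from writing the OTFS delay–Doppler input–output relation $\mathbf{y}=\widetilde{\mathbf{X}}\mathbf{h}+\mathbf{w}$, and $\mathbf{G}$ is the gain matrix of the matched filter estimate $\widetilde{\mathbf{X}}^{\mathrm H}\mathbf{y}$.) *)

theory Defs
  imports "HOL-Probability.Probability"
begin

definition qpsk :: "real \<Rightarrow> complex set" where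
  "qpsk Ps = {complex_of_real (sqrt (Ps / 2)) * (complex_of_real a + \<i> * complex_of_real b)
              | a b. a \<in> {1, -1} \<and> b \<in> {1, -1}}"

definition symbol_assignments :: "nat \<Rightarrow> nat \<Rightarrow> real \<Rightarrow> (nat \<times> nat \<Rightarrow> complex) set" where
  "symbol_assignments N M Ps =
     {x. (\<forall>k l. k < N \<and> l < M \<longrightarrow> x (k, l) \<in> qpsk Ps) \<and>
         (\<forall>k l. \<not> (k < N \<and> l < M) \<longrightarrow> x (k, l) = 0)}"

text \<open>i.i.d. uniform QPSK symbols = uniform distribution over all assignments.\<close>
definition qpsk_symbols :: "nat \<Rightarrow> nat \<Rightarrow> real \<Rightarrow> (nat \<times> nat \<Rightarrow> complex) pmf" where
  "qpsk_symbols N M Ps = pmf_of_set (symbol_assignments N M Ps)"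

definition centered :: "nat \<Rightarrow> nat \<Rightarrow> int" where
  "centered N k = (if 2 * k \<le> N then int k else int k - int N)"

definition Xt :: "nat \<Rightarrow> nat \<Rightarrow> (nat \<times> nat \<Rightarrow> complex) \<Rightarrow> nat \<Rightarrow> nat \<Rightarrow> complex" where
  "Xt N M x p q =
    (let k1 = p mod N; l1 = p div N; k2 = q mod N; l2 = q div N;
         a = nat ((int k1 - int k2) mod int N);
         b = nat ((int l1 - int l2) mod int M);
         ph = cis (2 * pi * real_of_int (centered N k2) * real b / (real M * real N))
     in if l1 < l2 then x (a, b) * cis (- 2 * pi * real k1 / real N) * ph
        else x (a, b) * ph)"

definition Gmat :: "nat \<Rightarrow> nat \<Rightarrow> (nat \<times> nat \<Rightarrow> complex) \<Rightarrow> nat \<Rightarrow> nat \<Rightarrow> complex" where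
  "Gmat N M x p q = (\<Sum>r < M * N. cnj (Xt N M x r p) * Xt N M x r q)"

definition cvariance :: "'a pmf \<Rightarrow> ('a \<Rightarrow> complex) \<Rightarrow> real" where
  "cvariance D Z = measure_pmf.expectation D
      (\<lambda>w. (cmod (Z w - measure_pmf.expectation D Z))\<^sup>2)"

end

theory Submission
  imports Defs
begin

definition alph :: "nat \<Rightarrow> nat \<Rightarrow> nat \<Rightarrow> nat \<Rightarrow> nat \<times> nat" where
  "alph N M p r = (nat ((int (r mod N) - int (p mod N)) mod int N),
                   nat ((int (r div N) - int (p div N)) mod int M))"

definition phs :: "nat \<Rightarrow> nat \<Rightarrow> nat \<Rightarrow> nat \<Rightarrow> complex" where
  "phs N M r p =
    (let k1 = r mod N; l1 = r div N; k2 = p mod N; l2 = p div N;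
         b = nat ((int l1 - int l2) mod int M);
         ph = cis (2 * pi * real_of_int (centered N k2) * real b / (real M * real N))
     in if l1 < l2 then cis (- 2 * pi * real k1 / real N) * ph else ph)"

lemma Xt_eq: "Xt N M x r p = x (alph N M p r) * phs N M r p"
  unfolding Xt_def phs_def alph_def Let_def by simp

lemma phs_norm: "cmod (phs N M r p) = 1"
  unfolding phs_def Let_def by (simp add: norm_mult)

lemma phs_cnj: "cnj (phs N M r p) * phs N M r p = 1"
  using phs_norm[of N M r p] by (metis complex_norm_square mult.commute of_real_1 power_one)

lemma alph_range:
  assumes "N > 0" "M > 0"
  shows "fst (alph N M p r) < N \<and> snd (alph N M p r) < M"
  using assms unfolding alph_def by (simp add: nat_less_iff)

lemma int_mod_diff_eq:
  fixes a b c n :: int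
  assumes "(a - c) mod n = (b - c) mod n" "0 \<le> a" "a < n" "0 \<le> b" "b < n"
  shows "a = b"
proof -
  have "n dvd (a - c) - (b - c)" using assms(1) by (simp only: mod_eq_dvd_iff)
  moreover have "(a - c) - (b - c) = a - b" by simp
  ultimately have "n dvd a - b" by simp
  hence "a mod n = b mod n" by (simp only: mod_eq_dvd_iff)
  moreover have "a mod n = a" "b mod n = b" using assms by (simp_all add: mod_pos_pos_trivial)
  ultimately show ?thesis by simp
qed

lemma int_mod_diff_eq2:
  fixes a b c n :: int
  assumes "(c - a) mod n = (c - b) mod n" "0 \<le> a" "a < n" "0 \<le> b" "b < n"
  shows "a = b"
proof -
  have "n dvd (c - a) - (c - b)" using assms(1) by (simp only: mod_eq_dvd_iff)
  moreover have "(c - a) - (c - b) = - (a - b)" by simp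
  ultimately have "n dvd a - b" by (simp only: dvd_minus_iff)
  hence "a mod n = b mod n" by (simp only: mod_eq_dvd_iff)
  moreover have "a mod n = a" "b mod n = b" using assms by (simp_all add: mod_pos_pos_trivial)
  ultimately show ?thesis by simp
qed

lemma alph_inj:
  assumes "N > 0" "M > 0" "r < M * N" "s < M * N" "alph N M p r = alph N M p s"
  shows "r = s"
proof -
  have rd: "r div N < M" "s div N < M" using assms(3,4) by (simp_all add: less_mult_imp_div_less)
  have e1: "(int (r mod N) - int (p mod N)) mod int N = (int (s mod N) - int (p mod N)) mod int N"
    using assms(5) using assms unfolding alph_def by (simp add: eq_nat_nat_iff)
  have e2: "(int (r div N) - int (p div N)) mod int M = (int (s div N) - int (p div N)) mod int M"
    using assms(5) using assms unfolding alph_def by (simp add: eq_nat_nat_iff)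
  have "int (r mod N) = int (s mod N)"
    by (rule int_mod_diff_eq[OF e1]) (use assms in auto)
  moreover have "int (r div N) = int (s div N)"
    by (rule int_mod_diff_eq[OF e2]) (use assms rd in auto)
  ultimately have "r mod N = s mod N" "r div N = s div N" by simp_all
  thus ?thesis by (metis div_mult_mod_eq)
qed

lemma alph_neq:
  assumes "N > 0" "M > 0" "p < M * N" "q < M * N" "p \<noteq> q"
  shows "alph N M p r \<noteq> alph N M q r"
proof
  assume a: "alph N M p r = alph N M q r"
  have rd: "p div N < M" "q div N < M" using assms(3,4) by (simp_all add: less_mult_imp_div_less)
  have e1: "(int (r mod N) - int (p mod N)) mod int N = (int (r mod N) - int (q mod N)) mod int N"
    using a using assms unfolding alph_def by (simp add: eq_nat_nat_iff)
  have e2: "(int (r div N) - int (p div N)) mod int M = (int (r div N) - int (q div N)) mod int M"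
    using a using assms unfolding alph_def by (simp add: eq_nat_nat_iff)
  have "int (p mod N) = int (q mod N)"
    by (rule int_mod_diff_eq2[OF e1]) (use assms in auto)
  moreover have "int (p div N) = int (q div N)"
    by (rule int_mod_diff_eq2[OF e2]) (use assms rd in auto)
  ultimately have "p mod N = q mod N" "p div N = q div N" by simp_all
  hence "p = q" by (metis div_mult_mod_eq)
  thus False using assms(5) by simp
qed


lemma qpsk_iff: "z \<in> qpsk Ps \<longleftrightarrow> (\<exists>a b. z = complex_of_real (sqrt (Ps / 2)) * (complex_of_real a + \<i> * complex_of_real b)
   \<and> a \<in> {1, -1} \<and> b \<in> {1, -1})"
  unfolding qpsk_def mem_Collect_eq by (rule refl)

lemma qpsk_rot: "z \<in> qpsk Ps \<Longrightarrow> \<i> * z \<in> qpsk Ps"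
proof -
  assume "z \<in> qpsk Ps"
  then obtain a b where z: "z = complex_of_real (sqrt (Ps / 2)) * (complex_of_real a + \<i> * complex_of_real b)"
    and ab: "a \<in> {1, -1}" "b \<in> {1, -1}" unfolding qpsk_iff by blast
  have e: "\<i> * z = complex_of_real (sqrt (Ps / 2)) * (complex_of_real (-b) + \<i> * complex_of_real a)"
    unfolding z by (simp add: algebra_simps)
  have mb: "-b \<in> {1, -1}" using ab by auto
  show ?thesis unfolding qpsk_iff
    by (rule exI[of _ "-b"], rule exI[of _ a], intro conjI e mb ab)
qed

lemma qpsk_rot': "z \<in> qpsk Ps \<Longrightarrow> - \<i> * z \<in> qpsk Ps"
proof -
  assume z: "z \<in> qpsk Ps"
  have e: "\<i> * (\<i> * (\<i> * z)) = - \<i> * z"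
    by (simp only: mult.assoc[symmetric] complex_i_mult_minus) simp
  show ?thesis unfolding e[symmetric] by (intro qpsk_rot z)
qed

lemma qpsk_norm: "Ps \<ge> 0 \<Longrightarrow> z \<in> qpsk Ps \<Longrightarrow> cnj z * z = complex_of_real Ps"
proof -
  assume P: "Ps \<ge> 0" and "z \<in> qpsk Ps"
  then obtain a b where z: "z = complex_of_real (sqrt (Ps / 2)) * (complex_of_real a + \<i> * complex_of_real b)"
    and ab: "a \<in> {1, -1}" "b \<in> {1, -1}" unfolding qpsk_iff by blast
  have a2: "a * a = 1" "b * b = 1" using ab by auto
  have s2: "sqrt (Ps / 2) * sqrt (Ps / 2) = Ps / 2" using P by simp
  have "cnj z * z = complex_of_real (sqrt (Ps / 2) * sqrt (Ps / 2) * (a * a + b * b))"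
    unfolding z by (simp add: algebra_simps complex_eq_iff)
  also have "\<dots> = complex_of_real Ps" using a2 s2 by simp
  finally show ?thesis .
qed

definition rot :: "nat \<times> nat \<Rightarrow> complex \<Rightarrow> (nat \<times> nat \<Rightarrow> complex) \<Rightarrow> (nat \<times> nat \<Rightarrow> complex)" where
  "rot u c x = x(u := c * x u)"

lemma rot_mem:
  assumes "x \<in> symbol_assignments N M Ps" "c = \<i> \<or> c = - \<i>"
  shows "rot u c x \<in> symbol_assignments N M Ps"
proof -
  have q: "c * z \<in> qpsk Ps" if "z \<in> qpsk Ps" for z
    using assms(2) qpsk_rot[OF that] qpsk_rot'[OF that] by blast
  show ?thesis using assms(1) q unfolding symbol_assignments_def rot_def by auto
qed

lemma rot_bij: "bij_betw (rot u \<i>) (symbol_assignments N M Ps) (symbol_assignments N M Ps)"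
proof (rule bij_betwI[where g = "rot u (- \<i>)"])
  show "rot u \<i> \<in> symbol_assignments N M Ps \<rightarrow> symbol_assignments N M Ps"
    using rot_mem by blast
  show "rot u (- \<i>) \<in> symbol_assignments N M Ps \<rightarrow> symbol_assignments N M Ps"
    using rot_mem by blast
qed (auto simp: rot_def fun_eq_iff)

lemma sum_rot_zero:
  assumes "\<And>x. f (rot u \<i> x) = c * f x" "c \<noteq> 1"
  shows "(\<Sum>x\<in>symbol_assignments N M Ps. f x) = (0::complex)"
proof -
  let ?S = "symbol_assignments N M Ps"
  have "(\<Sum>x\<in>?S. f x) = (\<Sum>x\<in>?S. f (rot u \<i> x))"
    using sum.reindex_bij_betw[OF rot_bij, of f u N M Ps] by simp
  also have "\<dots> = c * (\<Sum>x\<in>?S. f x)" by (simp add: assms(1) sum_distrib_left)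
  finally have "(1 - c) * (\<Sum>x\<in>?S. f x) = 0" by (simp add: algebra_simps)
  thus ?thesis using assms(2) by simp
qed

lemma S_finite: "finite (symbol_assignments N M Ps)"
proof -
  have sub: "symbol_assignments N M Ps \<subseteq>
     {f. \<forall>x. (x \<in> {..<N} \<times> {..<M} \<longrightarrow> f x \<in> qpsk Ps) \<and> (x \<notin> {..<N} \<times> {..<M} \<longrightarrow> f x = 0)}"
    unfolding symbol_assignments_def by auto
  have fq: "finite (qpsk Ps)"
  proof -
    have "qpsk Ps \<subseteq> (\<lambda>(a,b). complex_of_real (sqrt (Ps / 2)) * (complex_of_real a + \<i> * complex_of_real b)) ` ({1, -1} \<times> {1, -1})"
      unfolding qpsk_def by (auto intro!: image_eqI)
    thus ?thesis by (rule finite_subset) simp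
  qed
  show ?thesis
    by (rule finite_subset[OF sub finite_set_of_finite_funs]) (simp_all add: fq)
qed

lemma S_ne: "symbol_assignments N M Ps \<noteq> {}"
proof -
  let ?z = "complex_of_real (sqrt (Ps / 2)) * (complex_of_real 1 + \<i> * complex_of_real 1)"
  have "?z \<in> qpsk Ps" unfolding qpsk_def by blast
  hence "(\<lambda>u. if fst u < N \<and> snd u < M then ?z else 0) \<in> symbol_assignments N M Ps"
    unfolding symbol_assignments_def by auto
  thus ?thesis by blast
qed


lemma mom1:
  assumes "a \<noteq> b"
  shows "(\<Sum>x\<in>symbol_assignments N M Ps. cnj (x a) * x b) = 0"
  by (rule sum_rot_zero[where u = b and c = "\<i>"]) (use assms in \<open>auto simp: rot_def\<close>)

lemma mom2:
  assumes "a1 \<noteq> b1" "b2 \<noteq> b1"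
  shows "(\<Sum>x\<in>symbol_assignments N M Ps. cnj (x a1) * x b1 * (x a2 * cnj (x b2))) = 0"
proof (rule sum_rot_zero[where u = b1 and c = "if a2 = b1 then -1 else \<i>"])
  fix x :: "nat \<times> nat \<Rightarrow> complex"
  show "cnj (rot b1 \<i> x a1) * rot b1 \<i> x b1 * (rot b1 \<i> x a2 * cnj (rot b1 \<i> x b2)) =
     (if a2 = b1 then -1 else \<i>) * (cnj (x a1) * x b1 * (x a2 * cnj (x b2)))"
    using assms by (cases "a2 = b1") (auto simp: rot_def algebra_simps)
qed (auto simp: complex_eq_iff)

lemma mom_diag:
  assumes "Ps \<ge> 0" "fst a < N" "snd a < M" "fst b < N" "snd b < M"
  shows "(\<Sum>x\<in>symbol_assignments N M Ps. cnj (x a) * x b * (x a * cnj (x b)))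
     = of_nat (card (symbol_assignments N M Ps)) * complex_of_real (Ps\<^sup>2)"
proof -
  have "\<And>x. x \<in> symbol_assignments N M Ps \<Longrightarrow> cnj (x a) * x b * (x a * cnj (x b)) = complex_of_real (Ps\<^sup>2)"
  proof -
    fix x assume x: "x \<in> symbol_assignments N M Ps"
    have "x (fst a, snd a) \<in> qpsk Ps" "x (fst b, snd b) \<in> qpsk Ps"
      using x assms unfolding symbol_assignments_def by blast+
    hence "x a \<in> qpsk Ps" "x b \<in> qpsk Ps" by simp_all
    hence na: "cnj (x a) * x a = Ps" and nb: "cnj (x b) * x b = Ps" using qpsk_norm assms(1) by auto
    have "cnj (x a) * x b * (x a * cnj (x b)) = (cnj (x a) * x a) * (cnj (x b) * x b)"
      by (simp only: ac_simps)
    also have "\<dots> = complex_of_real (Ps\<^sup>2)" unfolding na nb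
      by (simp add: power2_eq_square)
    finally show "cnj (x a) * x b * (x a * cnj (x b)) = complex_of_real (Ps\<^sup>2)" .
  qed
  thus ?thesis by simp
qed


lemma exp_pmf_of_set:
  fixes f :: "'a \<Rightarrow> 'b::{banach, second_countable_topology}"
  assumes "finite S" "S \<noteq> {}"
  shows "measure_pmf.expectation (pmf_of_set S) f = (1 / real (card S)) *\<^sub>R (\<Sum>x\<in>S. f x)"
proof -
  have "measure_pmf.expectation (pmf_of_set S) f = (\<Sum>a\<in>S. pmf (pmf_of_set S) a *\<^sub>R f a)"
    by (rule integral_measure_pmf[OF assms(1)]) (use assms in simp)
  also have "\<dots> = (\<Sum>a\<in>S. (1 / real (card S)) *\<^sub>R f a)"
    by (rule sum.cong[OF refl]) (use assms in simp)
  finally show ?thesis by (simp add: scaleR_sum_right)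
qed

lemma cancel_card: "(c::nat) > 0 \<Longrightarrow> (1 / real c) *\<^sub>R (real c * (X::real)) = X"
  by simp

lemma reorder: "((a::complex) * u) * (c * v) = a * c * (u * v)"
  by (simp add: ac_simps)

theorem lemma1:
  fixes M N :: nat and Ps :: real and p q :: nat
  assumes "M > 0" and "N > 0" and "Ps > 0"
    and "p < M * N" and "q < M * N" and "p \<noteq> q"
  shows "measure_pmf.expectation (qpsk_symbols N M Ps) (\<lambda>x. Gmat N M x p q) = 0
       \<and> cvariance (qpsk_symbols N M Ps) (\<lambda>x. Gmat N M x p q) = real M * real N * Ps\<^sup>2"
proof -
  define S where "S = symbol_assignments N M Ps"
  define R where "R = {..<M * N}"
  have finite_R: "finite R" unfolding R_def by simp
  define A where "A r = cnj (phs N M r p) * phs N M r q" for r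
  define a where "a r = alph N M p r" for r
  define b where "b r = alph N M q r" for r
  have fS: "finite S" and neS: "S \<noteq> {}" unfolding S_def by (rule S_finite, rule S_ne)
  have D: "qpsk_symbols N M Ps = pmf_of_set S" unfolding qpsk_symbols_def S_def ..
  have ab: "a r \<noteq> b r" for r unfolding a_def b_def using alph_neq assms by blast
  have G: "Gmat N M x p q = (\<Sum>r\<in>R. A r * (cnj (x (a r)) * x (b r)))" for x
    unfolding Gmat_def R_def A_def a_def b_def Xt_eq by (simp add: algebra_simps)
  have Gc: "cnj (Gmat N M x p q) = (\<Sum>s\<in>R. cnj (A s) * (x (a s) * cnj (x (b s))))" for x
    unfolding G by (simp add: algebra_simps)
  have E0: "(\<Sum>x\<in>S. Gmat N M x p q) = 0"
  proof -
    have "(\<Sum>x\<in>S. Gmat N M x p q) = (\<Sum>r\<in>R. A r * (\<Sum>x\<in>S. cnj (x (a r)) * x (b r)))"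
      unfolding G by (subst sum.swap) (simp add: sum_distrib_left)
    also have "\<dots> = 0" unfolding S_def using mom1 ab by simp
    finally show ?thesis .
  qed
  have E: "measure_pmf.expectation (qpsk_symbols N M Ps) (\<lambda>x. Gmat N M x p q) = 0"
    unfolding D exp_pmf_of_set[OF fS neS] E0 by simp
  have mono: "(\<Sum>x\<in>S. cnj (x (a r)) * x (b r) * (x (a s) * cnj (x (b s))))
      = (if s = r then of_nat (card S) * complex_of_real (Ps\<^sup>2) else 0)"
    if rs: "r \<in> R" "s \<in> R" for r s
  proof (cases "s = r")
    case True
    thus ?thesis unfolding S_def a_def b_def
      using mom_diag[of Ps "alph N M p r" N M "alph N M q r"] alph_range[of N M] assms by simp
  next
    case False
    have "b s \<noteq> b r" unfolding b_def using alph_inj[of N M s r q] False rs assms R_def by auto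
    thus ?thesis using False mom2 ab unfolding S_def by simp
  qed
  have "complex_of_real (\<Sum>x\<in>S. (cmod (Gmat N M x p q))\<^sup>2) = (\<Sum>x\<in>S. Gmat N M x p q * cnj (Gmat N M x p q))"
    by (simp only: of_real_sum complex_norm_square)
  also have "\<dots> = (\<Sum>x\<in>S. \<Sum>r\<in>R. \<Sum>s\<in>R. A r * cnj (A s) * (cnj (x (a r)) * x (b r) * (x (a s) * cnj (x (b s)))))"
    by (rule sum.cong[OF refl]) (subst Gc, subst G, simp only: sum_product reorder)
  also have "\<dots> = (\<Sum>r\<in>R. \<Sum>s\<in>R. \<Sum>x\<in>S. A r * cnj (A s) * (cnj (x (a r)) * x (b r) * (x (a s) * cnj (x (b s)))))"
    by (subst sum.swap, rule sum.cong[OF refl], rule sum.swap)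
  also have "\<dots> = (\<Sum>r\<in>R. \<Sum>s\<in>R. A r * cnj (A s) * (\<Sum>x\<in>S. cnj (x (a r)) * x (b r) * (x (a s) * cnj (x (b s)))))"
    by (simp only: sum_distrib_left)
  also have "\<dots> = (\<Sum>r\<in>R. \<Sum>s\<in>R. if s = r then A r * cnj (A s) * (of_nat (card S) * complex_of_real (Ps\<^sup>2)) else 0)"
    by (intro sum.cong refl) (simp add: mono)
  also have "\<dots> = (\<Sum>r\<in>R. A r * cnj (A r) * (of_nat (card S) * complex_of_real (Ps\<^sup>2)))"
    by (rule sum.cong[OF refl]) (simp only: sum.delta[OF finite_R] if_True)
  also have "\<dots> = (\<Sum>r\<in>R. of_nat (card S) * complex_of_real (Ps\<^sup>2))"
  proof (rule sum.cong[OF refl])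
    fix r
    have "A r * cnj (A r) = (cnj (phs N M r p) * phs N M r p) * (cnj (phs N M r q) * phs N M r q)"
      unfolding A_def by (simp add: algebra_simps)
    thus "A r * cnj (A r) * (of_nat (card S) * complex_of_real (Ps\<^sup>2)) = of_nat (card S) * complex_of_real (Ps\<^sup>2)"
      by (simp add: phs_cnj)
  qed
  also have "\<dots> = complex_of_real (real (card S) * (real M * real N * Ps\<^sup>2))"
    unfolding R_def by simp
  finally have V: "(\<Sum>x\<in>S. (cmod (Gmat N M x p q))\<^sup>2) = real (card S) * (real M * real N * Ps\<^sup>2)"
    by (simp only: of_real_eq_iff)
  have cS: "card S > 0" using fS neS by (simp add: card_gt_0_iff)
  have "cvariance (qpsk_symbols N M Ps) (\<lambda>x. Gmat N M x p q) = real M * real N * Ps\<^sup>2"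
  proof -
    have "cvariance (qpsk_symbols N M Ps) (\<lambda>x. Gmat N M x p q)
        = (1 / real (card S)) *\<^sub>R (\<Sum>x\<in>S. (cmod (Gmat N M x p q))\<^sup>2)"
      unfolding cvariance_def D exp_pmf_of_set[OF fS neS] by (simp only: E0 scaleR_zero_right diff_zero)
    also have "\<dots> = real M * real N * Ps\<^sup>2" unfolding V using cS by (rule cancel_card)
    finally show ?thesis .
  qed
  with E show ?thesis by simp
qed

end
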